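(* In the setting described in the context, let $\lambda^*$ be an optimal solution of $\max_{\lambda\in\mathbb{R}^m}d(\lambda)$, and let $\{\lambda^k\}$ be generated by the IAL framework with a nonnegative sequence $\{\eta_k\}$ satisfying $\sum_{k=1}^{+\infty}\eta_k<+\infty$. Then $$\|\lambda^k-\lambda^*\|\le B:=\sqrt{\|\lambda^1-\lambda^*\|^2+2\beta\sum_{k=1}^{+\infty}\eta_k},\qquad k=1,2,\dots.$$
   Context: Let $A\in\mathbb{R}^{m\times n}$ and $b\in\mathbb{R}^m$. Let $f:\mathbb{R}^n\to\mathbb{R}$ be convex and differentiable with Lipschitz continuous gradient. Let $g:\mathbb{R}^n\to\mathbb{R}\cup\{+\infty\}$ be a closed proper convex (possibly nonsmooth) function with bounded domain. Fix a penalty parameter $\beta>0$. For $\lambda\in\mathbb{R}^m$, define $$\hat f_\beta(x;\lambda):=f(x)+\langle\lambda,Ax-b\rangle+\tfrac{\beta}{2}\|Ax-b\|^2,\qquad \mathcal{L}_\beta(x;\lambda):=\hat f_\beta(x;\lambda)+g(x),$$ and $d(\lambda):=\min_{x\in\mathbb{R}^n}\mathcal{L}_\beta(x;\lambda)$. Here $\nabla\hat f_\beta(x;\lambda)$ denotes the gradient of $\hat f_\beta$ with respect to $x$. IAL framework: choose $x^1\in\operatorname{dom} g$, $\lambda^1\in\mathbb{R}^m$, and a nonnegative sequence $\{\eta_k\}$. For $k=1,2,\dots$: find a point $x^{k+1}$ such that $$\max_{x\in\mathbb{R}^n}\Big\{\langle\nabla\hat f_\beta(x^{k+1};\lambda^k),\,x^{k+1}-x\rangle+g(x^{k+1})-g(x)\Big\}\le\eta_k,$$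 and then set $\lambda^{k+1}=\lambda^k+\beta(Ax^{k+1}-b)$. *)

theory Defs
  imports "HOL-Analysis.Analysis"
begin

definition fhat ::
  "(real^'n \<Rightarrow> real) \<Rightarrow> real^'n^'m \<Rightarrow> real^'m \<Rightarrow> real \<Rightarrow> real^'n \<Rightarrow> real^'m \<Rightarrow> real" where
  "fhat f A b beta x lam =
     f x + lam \<bullet> (A *v x - b) + beta / 2 * (norm (A *v x - b))\<^sup>2"

definition grad_fhat ::
  "(real^'n \<Rightarrow> real^'n) \<Rightarrow> real^'n^'m \<Rightarrow> real^'m \<Rightarrow> real \<Rightarrow> real^'n \<Rightarrow> real^'m \<Rightarrow> real^'n" where
  "grad_fhat f' A b beta x lam =
     f' x + transpose A *v (lam + beta *\<^sub>R (A *v x - b))"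

text \<open>The extended-valued function g is represented by its (effective) domain D
  and its finite values g on D (g = +infinity outside D).\<close>
definition Lbeta ::
  "(real^'n \<Rightarrow> real) \<Rightarrow> (real^'n \<Rightarrow> real) \<Rightarrow> real^'n^'m \<Rightarrow> real^'m \<Rightarrow> real \<Rightarrow> real^'n \<Rightarrow> real^'m \<Rightarrow> real" where
  "Lbeta f g A b beta x lam = fhat f A b beta x lam + g x"

definition dual ::
  "(real^'n \<Rightarrow> real) \<Rightarrow> (real^'n \<Rightarrow> real) \<Rightarrow> (real^'n) set \<Rightarrow> real^'n^'m \<Rightarrow> real^'m \<Rightarrow> real \<Rightarrow> real^'m \<Rightarrow> real" where
  "dual f g D A b beta lam = (INF x\<in>D. Lbeta f g A b beta x lam)"

definition closed_proper_convex_bdd_dom :: "(real^'n) set \<Rightarrow> (real^'n \<Rightarrow> real) \<Rightarrow> bool" where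
  "closed_proper_convex_bdd_dom D g \<longleftrightarrow>
     D \<noteq> {} \<and> convex D \<and> bounded D \<and> convex_on D g \<and>
     closed {(x, t). x \<in> D \<and> g x \<le> t}"

end

theory Submission
  imports Defs
begin

lemma grad_ineq:
  fixes f :: "real^'n \<Rightarrow> real"
  assumes cv: "convex_on UNIV f"
    and fd: "\<And>z. (f has_derivative (\<lambda>h. f' z \<bullet> h)) (at z)"
  shows "f z \<ge> f x + f' x \<bullet> (z - x)"
proof -
  define d where "d = z - x"
  define h where "h = (\<lambda>t::real. f (x + t *\<^sub>R d))"
  have hc: "convex_on UNIV h"
  proof (rule convex_onI)
    fix t a c :: real assume t: "t > 0" "t < 1"
    have "x + ((1 - t) *\<^sub>R a + t *\<^sub>R c) *\<^sub>R d = (1 - t) *\<^sub>R (x + a *\<^sub>R d) + t *\<^sub>R (x + c *\<^sub>R d)"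
      by (simp add: algebra_simps)
    then show "h ((1 - t) *\<^sub>R a + t *\<^sub>R c) \<le> (1 - t) * h a + t * h c"
      unfolding h_def using convex_onD[OF cv, of t "x + a *\<^sub>R d" "x + c *\<^sub>R d"] t by simp
  qed simp
  have "((\<lambda>t. x + t *\<^sub>R d) has_derivative (\<lambda>t. t *\<^sub>R d)) (at 0)"
    by (auto intro!: derivative_eq_intros)
  from has_derivative_compose[OF this fd[of "x + 0 *\<^sub>R d"]]
  have "(h has_derivative (\<lambda>t. f' x \<bullet> (t *\<^sub>R d))) (at 0)"
    by (simp add: h_def o_def)
  then have "(h has_field_derivative (f' x \<bullet> d)) (at 0 within UNIV)"
    unfolding has_field_derivative_def
  proof -
    assume a: "(h has_derivative (\<lambda>t. f' x \<bullet> (t *\<^sub>R d))) (at 0)"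
    have "(\<lambda>t. f' x \<bullet> (t *\<^sub>R d)) = (*) (f' x \<bullet> d)" by (auto simp: fun_eq_iff)
    with a show "(h has_derivative (*) (f' x \<bullet> d)) (at 0 within UNIV)" by simp
  qed
  from convex_on_imp_above_tangent[OF hc _ _ _ this, of 1]
  have "h 1 - h 0 \<ge> (f' x \<bullet> d) * (1 - 0)" by simp
  then show ?thesis by (simp add: h_def d_def)
qed

lemma step:
  fixes f :: "real^'n \<Rightarrow> real" and A :: "real^'n^'m"
  assumes cv: "convex_on UNIV f"
    and fd: "\<And>z. (f has_derivative (\<lambda>h. f' z \<bullet> h)) (at z)"
    and bp: "beta > 0"
    and Dne: "D \<noteq> {}"
    and opt: "\<And>mu. dual f g D A b beta mu \<le> dual f g D A b beta lamstar"
    and xp: "xp \<in> D"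
    and cond: "\<forall>z\<in>D. grad_fhat f' A b beta xp l \<bullet> (xp - z) + g xp - g z \<le> eta"
    and lp: "lp = l + beta *\<^sub>R (A *v xp - b)"
  shows "(norm (lp - lamstar))\<^sup>2 \<le> (norm (l - lamstar))\<^sup>2 + 2 * beta * eta"
proof -
  define r where "r = A *v xp - b"
  define C where "C = f xp + g xp + lp \<bullet> r"
  have key: "C \<le> f z + g z + lp \<bullet> (A *v z - b) + eta" if z: "z \<in> D" for z
  proof -
    have c1: "(f' xp + transpose A *v lp) \<bullet> (xp - z) + g xp - g z \<le> eta"
      using cond z lp unfolding grad_fhat_def by auto
    have "(transpose A *v lp) \<bullet> (xp - z) = lp \<bullet> (A *v xp - b) - lp \<bullet> (A *v z - b)"
      by (simp add: dot_lmul_matrix matrix_vector_mult_diff_distrib inner_diff_right)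
    moreover have "f z \<ge> f xp + f' xp \<bullet> (z - xp)" by (rule grad_ineq[OF cv fd])
    moreover have "f' xp \<bullet> (z - xp) = - (f' xp \<bullet> (xp - z))"
      by (simp add: inner_diff_right)
    ultimately show ?thesis using c1 unfolding C_def r_def by (simp add: inner_add_left)
  qed
  have lower: "Lbeta f g A b beta z mu \<ge> C - eta - (norm (mu - lp))\<^sup>2 / (2 * beta)"
    if z: "z \<in> D" for z mu
  proof -
    define w where "w = A *v z - b"
    define v where "v = mu - lp"
    have sq: "0 \<le> (norm (v + beta *\<^sub>R w))\<^sup>2" by simp
    have "(v + beta *\<^sub>R w) \<bullet> (v + beta *\<^sub>R w) = v \<bullet> v + 2 * beta * (v \<bullet> w) + beta\<^sup>2 * (w \<bullet> w)"
      by (simp add: inner_add_left inner_add_right power2_eq_square algebra_simps inner_commute)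
    then have "(norm (v + beta *\<^sub>R w))\<^sup>2 = (norm v)\<^sup>2 + 2 * beta * (v \<bullet> w) + beta\<^sup>2 * (norm w)\<^sup>2"
      by (simp only: power2_norm_eq_inner)
    with sq have nn: "0 \<le> (norm v)\<^sup>2 + 2 * beta * (v \<bullet> w) + beta\<^sup>2 * (norm w)\<^sup>2" by linarith
    have "(v \<bullet> w + beta / 2 * (norm w)\<^sup>2) - (- (norm v)\<^sup>2 / (2 * beta))
        = ((norm v)\<^sup>2 + 2 * beta * (v \<bullet> w) + beta\<^sup>2 * (norm w)\<^sup>2) / (2 * beta)"
      using bp by (simp add: field_simps power2_eq_square)
    also have "\<dots> \<ge> 0" using nn bp by simp
    finally have "v \<bullet> w + beta / 2 * (norm w)\<^sup>2 \<ge> - (norm v)\<^sup>2 / (2 * beta)" by simp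
    moreover have "Lbeta f g A b beta z mu = f z + g z + lp \<bullet> w + (v \<bullet> w + beta / 2 * (norm w)\<^sup>2)"
      unfolding Lbeta_def fhat_def v_def w_def by (simp add: inner_diff_left)
    ultimately show ?thesis using key[OF z] unfolding w_def v_def by linarith
  qed
  have bdd: "bdd_below ((\<lambda>z. Lbeta f g A b beta z mu) ` D)" for mu
    using lower by (auto intro!: bdd_belowI2[where m = "C - eta - (norm (mu - lp))\<^sup>2 / (2 * beta)"])
  have d1: "dual f g D A b beta lp \<ge> C - eta"
    unfolding dual_def using Dne lower[of _ lp] by (auto intro!: cINF_greatest)
  have d2: "dual f g D A b beta lamstar \<le> Lbeta f g A b beta xp lamstar"
    unfolding dual_def using xp bdd by (auto intro!: cINF_lower)
  have "Lbeta f g A b beta xp lamstar = C + (lamstar - lp) \<bullet> r + beta / 2 * (norm r)\<^sup>2"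
    unfolding Lbeta_def fhat_def C_def r_def by (simp add: inner_diff_left)
  with d1 d2 opt[of lp] have ineq: "(lp - lamstar) \<bullet> r \<le> eta + beta / 2 * (norm r)\<^sup>2"
    by (simp add: inner_diff_left)
  have e1: "lp - lamstar = (l - lamstar) + beta *\<^sub>R r" using lp r_def by simp
  have "(norm (lp - lamstar))\<^sup>2 = (norm (l - lamstar))\<^sup>2 + 2 * beta * ((lp - lamstar) \<bullet> r) - beta\<^sup>2 * (norm r)\<^sup>2"
  proof -
    have "((l - lamstar) + beta *\<^sub>R r) \<bullet> ((l - lamstar) + beta *\<^sub>R r) = (l - lamstar) \<bullet> (l - lamstar) + 2 * beta * (((l - lamstar) + beta *\<^sub>R r) \<bullet> r) - beta\<^sup>2 * (r \<bullet> r)"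
      by (simp add: inner_add_left inner_add_right power2_eq_square algebra_simps inner_commute)
    then show ?thesis unfolding e1 by (simp only: power2_norm_eq_inner)
  qed
  also have "\<dots> \<le> (norm (l - lamstar))\<^sup>2 + 2 * beta * (eta + beta / 2 * (norm r)\<^sup>2) - beta\<^sup>2 * (norm r)\<^sup>2"
    using ineq bp by (simp add: mult_left_mono)
  also have "\<dots> = (norm (l - lamstar))\<^sup>2 + 2 * beta * eta" by (simp add: algebra_simps power2_eq_square)
  finally show ?thesis .
qed

theorem lemma3:
  fixes f :: "real^'n \<Rightarrow> real" and f' :: "real^'n \<Rightarrow> real^'n"
    and g :: "real^'n \<Rightarrow> real" and D :: "(real^'n) set"
    and A :: "real^'n^'m" and b :: "real^'m" and beta :: real
    and x :: "nat \<Rightarrow> real^'n" and lam :: "nat \<Rightarrow> real^'m" and eta :: "nat \<Rightarrow> real"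
    and lamstar :: "real^'m"
  assumes f_convex: "convex_on UNIV f"
    and f_grad: "\<And>z. (f has_derivative (\<lambda>h. f' z \<bullet> h)) (at z)"
    and f_lip: "\<exists>L. \<forall>y z. norm (f' y - f' z) \<le> L * norm (y - z)"
    and g_cpc: "closed_proper_convex_bdd_dom D g"
    and beta_pos: "beta > 0"
    and opt: "\<And>mu. dual f g D A b beta mu \<le> dual f g D A b beta lamstar"
    and x1: "x 1 \<in> D"
    and eta_nonneg: "\<And>k. k \<ge> 1 \<Longrightarrow> eta k \<ge> 0"
    and eta_sum: "summable (\<lambda>k. eta (Suc k))"
    and inexact: "\<And>k. k \<ge> 1 \<Longrightarrow> x (Suc k) \<in> D \<and>
        (\<forall>z\<in>D. grad_fhat f' A b beta (x (Suc k)) (lam k) \<bullet> (x (Suc k) - z)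
                 + g (x (Suc k)) - g z \<le> eta k)"
    and update: "\<And>k. k \<ge> 1 \<Longrightarrow> lam (Suc k) = lam k + beta *\<^sub>R (A *v x (Suc k) - b)"
  shows "\<forall>k\<ge>1. norm (lam k - lamstar)
           \<le> sqrt ((norm (lam 1 - lamstar))\<^sup>2 + 2 * beta * (\<Sum>k. eta (Suc k)))"
proof -
  have Dne: "D \<noteq> {}" using g_cpc unfolding closed_proper_convex_bdd_dom_def by simp
  have en: "\<And>j. eta (Suc j) \<ge> 0" using eta_nonneg by simp
  have main: "(norm (lam (Suc n) - lamstar))\<^sup>2 \<le> (norm (lam 1 - lamstar))\<^sup>2 + 2 * beta * (\<Sum>j<n. eta (Suc j))" for n
  proof (induction n)
    case 0 then show ?case by simp
  next
    case (Suc n)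
    have k1: "Suc n \<ge> 1" by simp
    have "(norm (lam (Suc (Suc n)) - lamstar))\<^sup>2 \<le> (norm (lam (Suc n) - lamstar))\<^sup>2 + 2 * beta * eta (Suc n)"
      using inexact[OF k1] by (intro step[OF f_convex f_grad beta_pos Dne opt, of "x (Suc (Suc n))" "lam (Suc n)"] update[OF k1]) auto
    with Suc.IH show ?case by (simp add: algebra_simps)
  qed
  show ?thesis
  proof (intro allI impI)
    fix k :: nat assume "k \<ge> 1"
    then obtain n where kn: "k = Suc n" by (cases k) auto
    have "(\<Sum>j<n. eta (Suc j)) \<le> (\<Sum>j. eta (Suc j))"
      using eta_sum en by (intro sum_le_suminf) auto
    then have "2 * beta * (\<Sum>j<n. eta (Suc j)) \<le> 2 * beta * (\<Sum>j. eta (Suc j))"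
      using beta_pos by (intro mult_left_mono) auto
    then have "(norm (lam k - lamstar))\<^sup>2 \<le> (norm (lam 1 - lamstar))\<^sup>2 + 2 * beta * (\<Sum>j. eta (Suc j))"
      using main[of n] unfolding kn by linarith
    then show "norm (lam k - lamstar) \<le> sqrt ((norm (lam 1 - lamstar))\<^sup>2 + 2 * beta * (\<Sum>k. eta (Suc k)))"
      by (rule real_le_rsqrt)
  qed
qed

end
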